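(* Let $P,Q,R\in D$ be non-collinear. Identify $S^1$ with $\mathbb{R}/\mathbb{Z}$ via $t\mapsto(\cos2\pi t,\sin2\pi t)$. Let $T_1,T_2\in S^1$ be the endpoints of the chord through $P,Q$, labelled so that $T_1-T_2\in(0,1/2]\bmod 1$; let $T_3\in S^1$ satisfy $2T_3=T_1+T_2\bmod 1$ and $T_3-T_2\in(0,1/2]\bmod1$, and let $T_4=T_3+\frac14\bmod 1$. Use Cartesian coordinates $(x_1,x_2)'$ with respect to the orthonormal basis $\{T_3,T_4\}$ (viewed as unit vectors). Let $u$ be the $x_1$-coordinate of $P$ (equal to that of $Q$), and $k:=e^{d'(P,Q)}$. Put $$A=\frac{2k(k^2+1)(1-u^2)}{(k^2-2ku+1)(k^2+2ku+1)},\quad B=\frac{(k^2+1)\sqrt{1-u^2}}{\sqrt{(k^2-2ku+1)(k^2+2ku+1)}},\quad C=\frac{(k^2-1)^2u}{(k^2-2ku+1)(k^2+2ku+1)},$$ and let $E=\{(x_1,x_2)': \frac{(x_1-C)^2}{A^2}+\frac{x_2^2}{B^2}=1\}$, with $\Phi$ the open region bounded by $E$. Then $E\subset D\cup S^1$ and $E$ is tangent to $S^1$ at $T_1$ and $T_2$. Moreover, if $m$ is the number of triangles inscribed in $S^1$ and circumscribing $\triangle PQR$, then $$m=\begin{cases}0 & \text{if } R\in\Phi,\\ 1 & \text{if } R\in E,\\ 2 & \text{if } R\in D\setminus\overline{\Phi}.\end{cases}$$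
   Context: $D=\{(x,y)\in\mathbb{R}^2: x^2+y^2<1\}$ (Beltrami–Klein disk), $S^1$ its boundary circle. For $P,Q\in D$, let $v_1,v_2\in S^1$ be the endpoints of the chord through $P,Q$; then $d'(P,Q)=\frac12\left|\log\frac{|v_1Q||v_2P|}{|v_1P||v_2Q|}\right|$ (this is the Poincaré-disk distance transported by the map $G^{-1}(x,y)=\left(\frac{x}{1+\sqrt{1-x^2-y^2}},\frac{y}{1+\sqrt{1-x^2-y^2}}\right)$). A triangle inscribed in $S^1$ and circumscribing $\triangle PQR$ is a Euclidean triangle with three distinct vertices on $S^1$ such that $P$, $Q$, $R$ lie on three distinct sides of it (one point on each side). *)

theory Defs
  imports "HOL-Analysis.Analysis"
begin

text \<open>Points of the plane R^2 are represented as complex numbers (x,y) = x + i y.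
  The Beltrami-Klein disk is D = ball 0 1, its boundary circle S^1 = sphere 0 1.\<close>

definition KD :: "complex set" where
  "KD = ball 0 1"

definition S1 :: "complex set" where
  "S1 = sphere 0 1"

definition chord_ends :: "complex \<Rightarrow> complex \<Rightarrow> complex \<Rightarrow> complex \<Rightarrow> bool" where
  "chord_ends P Q v1 v2 \<longleftrightarrow> P \<noteq> Q \<and> v1 \<in> S1 \<and> v2 \<in> S1 \<and> v1 \<noteq> v2 \<and> collinear {v1, v2, P, Q}"

text \<open>The Klein distance d'(P,Q) (formula is symmetric in the labelling of v1, v2).\<close>
definition kdist :: "complex \<Rightarrow> complex \<Rightarrow> real" where
  "kdist P Q = (if P = Q then 0 else
     (let (v1, v2) = (SOME (v1, v2). chord_ends P Q v1 v2)
      in 1/2 * \<bar>ln ((dist v1 Q * dist v2 P) / (dist v1 P * dist v2 Q))\<bar>))"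

definition circ_tri :: "complex \<Rightarrow> complex \<Rightarrow> complex \<Rightarrow> complex set \<Rightarrow> bool" where
  "circ_tri P Q R V \<longleftrightarrow> (\<exists>a b c. V = {a, b, c} \<and> a \<noteq> b \<and> b \<noteq> c \<and> a \<noteq> c \<and>
      a \<in> S1 \<and> b \<in> S1 \<and> c \<in> S1 \<and>
      P \<in> closed_segment b c \<and> Q \<in> closed_segment c a \<and> R \<in> closed_segment a b)"

definition circpt :: "real \<Rightarrow> complex" where
  "circpt t = cis (2 * pi * t)"

definition ellF :: "real \<Rightarrow> real \<Rightarrow> real \<Rightarrow> complex \<Rightarrow> complex \<Rightarrow> complex \<Rightarrow> real" where
  "ellF A B C e3 e4 z = (z \<bullet> e3 - C)\<^sup>2 / A\<^sup>2 + (z \<bullet> e4)\<^sup>2 / B\<^sup>2"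

end

theory Submission
  imports Defs
begin


definition sg :: "complex \<Rightarrow> complex \<Rightarrow> complex" where
  "sg X z = (X - z) / (1 - cnj X * z)"

lemma cm1: "cmod c = 1 \<Longrightarrow> c * cnj c = 1"
  by (metis complex_norm_square mult.commute of_real_1 power_one)

lemma den_nz: assumes "cmod X < 1" "cmod z \<le> 1" shows "1 - cnj X * z \<noteq> 0"
proof
  assume "1 - cnj X * z = 0"
  hence "cnj X * z = 1" by simp
  hence "cmod X * cmod z = 1" by (metis complex_mod_cnj norm_mult norm_one)
  moreover have "cmod X * cmod z < 1"
    using assms by (metis mult_le_one norm_ge_zero order_le_less_trans less_eq_real_def mult_less_cancel_left1 order.trans mult_le_cancel_left1)
  ultimately show False by simp
qed

lemma sg_sphere: assumes "cmod X < 1" "cmod c = 1" shows "cmod (sg X c) = 1"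
proof -
  have "1 - cnj X * c = c * cnj (c - X)" using cm1[OF assms(2)] by (simp add: algebra_simps)
  hence "cmod (1 - cnj X * c) = cmod (X - c)"
    using assms(2) by (simp add: norm_mult) (metis complex_cnj_diff complex_mod_cnj norm_minus_commute)
  moreover have "X - c \<noteq> 0" using assms by auto
  ultimately show ?thesis by (simp add: sg_def norm_divide)
qed

lemma sg_seg: assumes "cmod X < 1" "cmod c = 1" shows "X \<in> closed_segment c (sg X c)"
proof -
  have cc: "c * cnj c = 1" using cm1 assms by auto
  define d where "d = 1 - cnj X * c"
  have d: "d \<noteq> 0" using den_nz assms d_def by auto
  define a where "a = sg X c"
  have ad: "a * d = X - c" using d by (simp add: a_def sg_def d_def)
  define nn where "nn = (cmod (X - c))^2"
  define dd where "dd = 2 - 2 * Re (X * cnj c)"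
  have re: "Re (X * cnj c) < 1"
  proof -
    have "Re (X * cnj c) \<le> cmod (X * cnj c)" by (rule complex_Re_le_cmod)
    also have "\<dots> = cmod X" using assms by (simp add: norm_mult)
    finally show ?thesis using assms by simp
  qed
  hence ddp: "dd > 0" by (simp add: dd_def)
  have nnc: "complex_of_real nn = (X - c) * (cnj X - cnj c)"
    unfolding nn_def complex_norm_square by simp
  have ddc: "complex_of_real dd = 2 - X * cnj c - cnj X * c"
    by (simp add: dd_def complex_eq_iff)
  have key0: "(X - c) * complex_of_real dd * d = complex_of_real nn * ((X - c) - c * d)"
    unfolding nnc ddc d_def using cc by algebra
  have key: "((X - c) * complex_of_real dd) * d = (complex_of_real nn * (a - c)) * d"
    using key0 ad by algebra
  hence "(X - c) * complex_of_real dd = complex_of_real nn * (a - c)"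
    using d mult_right_cancel by blast
  hence eq: "X = c + complex_of_real (nn/dd) * (a - c)" using ddp
    by (simp add: field_simps)
  have "nn \<le> dd"
  proof -
    have "nn = (X - c) \<bullet> (X - c)" by (simp add: nn_def power2_norm_eq_inner)
    also have "\<dots> = (cmod X)^2 - 2 * (X \<bullet> c) + (cmod c)^2"
      by (simp add: inner_diff_left inner_diff_right power2_norm_eq_inner inner_commute)
    also have "X \<bullet> c = Re (X * cnj c)" by (simp add: inner_complex_def)
    finally have "nn = (cmod X)^2 - 2 * Re (X * cnj c) + 1" using assms by simp
    moreover have "(cmod X)^2 \<le> 1" using assms by (simp add: abs_square_le_1)
    ultimately show ?thesis by (simp add: dd_def)
  qed
  hence "nn/dd \<le> 1" "0 \<le> nn/dd" using ddp by (auto simp: nn_def)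
  moreover have gen: "\<And>m::real. c + complex_of_real m * (a - c) = (1 - m) *\<^sub>R c + m *\<^sub>R a"
    by (simp add: scaleR_conv_of_real algebra_simps)
  ultimately show ?thesis unfolding in_segment a_def[symmetric]
    using eq gen[of "nn/dd"] by metis
qed

lemma sg_unique: assumes "cmod X < 1" "cmod c = 1" "cmod a = 1"
  and "X = c + complex_of_real \<mu> * (a - c)" shows "a = sg X c"
proof -
  have cc: "c * cnj c = 1" "a * cnj a = 1" using cm1 assms by auto
  have cx: "cnj X = cnj c + complex_of_real \<mu> * (cnj a - cnj c)" using assms(4) by simp
  have d: "1 - cnj X * c \<noteq> 0" using den_nz[OF assms(1)] assms(2) by simp
  have alg: "\<And>m. a * (1 - (cnj c + m * (cnj a - cnj c)) * c) = m * (a - c)" using cc by algebra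
  have "a * (1 - cnj X * c) = X - c" unfolding cx using alg by (simp add: assms(4))
  thus ?thesis using d by (simp add: sg_def field_simps)
qed

lemma seg_mu: "x \<in> closed_segment c a \<Longrightarrow> \<exists>\<mu>. x = c + complex_of_real \<mu> * (a - c)"
  unfolding in_segment by (auto simp: scaleR_conv_of_real algebra_simps)

lemma sg_ne: assumes "cmod X < 1" "cmod c = 1" shows "sg X c \<noteq> c"
proof
  assume "sg X c = c"
  hence "X \<in> closed_segment c c" using sg_seg[OF assms] by simp
  thus False using assms by simp
qed

lemma sg_invol: assumes "cmod X < 1" "cmod c = 1" shows "sg X (sg X c) = c"
proof -
  have "X \<in> closed_segment (sg X c) c" using sg_seg[OF assms] by (simp add: closed_segment_commute)
  then obtain m where "X = sg X c + complex_of_real m * (c - sg X c)" using seg_mu by blast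
  thus ?thesis using sg_unique[OF assms(1) sg_sphere[OF assms] assms(2)] by simp
qed



definition bet :: "complex \<Rightarrow> complex \<Rightarrow> complex \<Rightarrow> complex" where
  "bet P Q R = P + Q - R - P * Q * cnj R"
definition alp :: "complex \<Rightarrow> complex \<Rightarrow> complex \<Rightarrow> complex" where
  "alp P Q R = -1 + R * cnj Q + P * cnj R - P * cnj Q"

lemma fix_iff: assumes P: "cmod P < 1" and Q: "cmod Q < 1" and R: "cmod R < 1" and c: "cmod c = 1"
  shows "sg R (sg Q c) = sg P c \<longleftrightarrow> Re (cnj (bet P Q R) * c) = - Re (alp P Q R)"
proof -
  define a where "a = sg Q c"
  define dQ where "dQ = 1 - cnj Q * c"
  define dP where "dP = 1 - cnj P * c"
  define dR where "dR = 1 - cnj R * a"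
  have a1: "cmod a = 1" using sg_sphere[OF Q c] a_def by simp
  have nQ: "dQ \<noteq> 0" using den_nz[OF Q] c dQ_def by simp
  have nP: "dP \<noteq> 0" using den_nz[OF P] c dP_def by simp
  have nR: "dR \<noteq> 0" using den_nz[OF R] a1 dR_def by simp
  have ad: "a * dQ = Q - c" using nQ by (simp add: a_def sg_def dQ_def)
  have cc: "c * cnj c = 1" using cm1 c by auto
  define bb where "bb = bet P Q R"
  define aa where "aa = alp P Q R"
  have cbb: "cnj bb = cnj P + cnj Q - cnj R - cnj P * cnj Q * R" by (simp add: bb_def bet_def)
  have caa: "cnj aa = -1 + cnj R * Q + cnj P * R - cnj P * Q" by (simp add: aa_def alp_def)
  have poly: "((R - a) * dP - (P - c) * dR) * dQ = - (bb + (aa + cnj aa) * c + cnj bb * c^2)"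
    unfolding cbb caa unfolding bb_def aa_def bet_def alp_def dP_def dR_def
    using ad unfolding dQ_def by algebra
  have "sg R a = sg P c \<longleftrightarrow> (R - a) / dR = (P - c) / dP" by (simp add: sg_def dR_def dP_def)
  also have "\<dots> \<longleftrightarrow> (R - a) * dP = (P - c) * dR" using nR nP by (simp add: frac_eq_eq)
  also have "\<dots> \<longleftrightarrow> ((R - a) * dP - (P - c) * dR) * dQ = 0" using nQ by simp
  also have "\<dots> \<longleftrightarrow> bb + (aa + cnj aa) * c + cnj bb * c^2 = 0" unfolding poly by (simp only: neg_equal_0_iff_equal mult_eq_0_iff)
  also have "\<dots> \<longleftrightarrow> cnj c * (bb + (aa + cnj aa) * c + cnj bb * c^2) = 0" using cc by auto
  also have "cnj c * (bb + (aa + cnj aa) * c + cnj bb * c^2) = (cnj bb * c + bb * cnj c) + (aa + cnj aa)"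
  proof -
    have "cnj c * (bb + (aa + cnj aa) * c + cnj bb * c^2) - ((cnj bb * c + bb * cnj c) + (aa + cnj aa))
       = (c * cnj c - 1) * ((aa + cnj aa) + cnj bb * c)" by (simp add: algebra_simps power2_eq_square)
    thus ?thesis using cc by simp
  qed
  also have "\<dots> = complex_of_real (2 * Re (cnj bb * c) + 2 * Re aa)"
    using complex_add_cnj[of "cnj bb * c"] complex_add_cnj[of aa] by simp
  finally have "sg R a = sg P c \<longleftrightarrow> 2 * Re (cnj bb * c) + 2 * Re aa = 0"
    by (simp only: of_real_eq_0_iff)
  thus ?thesis unfolding a_def bb_def aa_def by (smt (verit))
qed


lemma circ_pts: fixes b :: complex and h :: real
  assumes "cmod c = 1" "Re (cnj b * c) = h" "b \<noteq> 0"
  shows "h^2 \<le> (cmod b)^2 \<and> (c = b * Complex h (sqrt ((cmod b)^2 - h^2)) / complex_of_real ((cmod b)^2)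
        \<or> c = b * Complex h (- sqrt ((cmod b)^2 - h^2)) / complex_of_real ((cmod b)^2))"
proof -
  define w where "w = cnj b * c"
  have bb: "b * cnj b = complex_of_real ((cmod b)^2)" by (rule complex_norm_square[symmetric])
  have nb: "complex_of_real ((cmod b)^2) \<noteq> 0" using assms by simp
  have cw: "c = b * w / complex_of_real ((cmod b)^2)"
    using nb unfolding w_def bb[symmetric] by (simp add: field_simps)
  have mw: "cmod w = cmod b" using assms by (simp add: w_def norm_mult)
  have "(Re w)^2 + (Im w)^2 = (cmod w)^2" by (simp add: cmod_power2)
  hence "(Re w)^2 + (Im w)^2 = (cmod b)^2" using mw by simp
  hence im: "(Im w)^2 = (cmod b)^2 - h^2" using assms(2) w_def by simp
  have "0 \<le> (Im w)^2" by simp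
  hence le: "h^2 \<le> (cmod b)^2" using im by linarith
  have sq: "sqrt ((cmod b)^2 - h^2) = \<bar>Im w\<bar>" using im[symmetric] by simp
  have "Im w = sqrt ((cmod b)^2 - h^2) \<or> Im w = - sqrt ((cmod b)^2 - h^2)"
    unfolding sq by (cases "Im w \<ge> 0") auto
  hence "w = Complex h (sqrt ((cmod b)^2 - h^2)) \<or> w = Complex h (- sqrt ((cmod b)^2 - h^2))"
    using assms(2) w_def by (auto simp: complex_eq_iff)
  thus ?thesis using cw le by auto
qed

lemma circ_pts_conv: fixes b :: complex and h t :: real
  assumes "b \<noteq> 0" "t^2 = (cmod b)^2 - h^2"
  shows "cmod (b * Complex h t / complex_of_real ((cmod b)^2)) = 1"
    "Re (cnj b * (b * Complex h t / complex_of_real ((cmod b)^2))) = h"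
proof -
  have bb: "cnj b * b = complex_of_real ((cmod b)^2)" by (subst mult.commute) (rule complex_norm_square[symmetric])
  have nb: "complex_of_real ((cmod b)^2) \<noteq> 0" using assms by simp
  have "cmod (Complex h t) = cmod b" using assms(2)
    by (simp add: cmod_def)
  thus "cmod (b * Complex h t / complex_of_real ((cmod b)^2)) = 1"
    using assms by (simp add: norm_mult norm_divide power2_eq_square)
  have gen: "\<And>r z. cnj b * b = r \<Longrightarrow> r \<noteq> 0 \<Longrightarrow> cnj b * (b * z / r) = z"
    by (simp add: field_simps)
  have "cnj b * (b * Complex h t / complex_of_real ((cmod b)^2)) = Complex h t"
    by (rule gen[OF bb nb])
  thus "Re (cnj b * (b * Complex h t / complex_of_real ((cmod b)^2))) = h" by simp
qed



lemma tri_set: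
  assumes P: "cmod P < 1" and Q: "cmod Q < 1" and R: "cmod R < 1"
  shows "{V. circ_tri P Q R V} = (\<lambda>c. {sg Q c, sg R (sg Q c), c}) ` {c. cmod c = 1 \<and> sg R (sg Q c) = sg P c}"
    and "inj_on (\<lambda>c. {sg Q c, sg R (sg Q c), c}) {c. cmod c = 1 \<and> sg R (sg Q c) = sg P c}"
proof -
  show "{V. circ_tri P Q R V} = (\<lambda>c. {sg Q c, sg R (sg Q c), c}) ` {c. cmod c = 1 \<and> sg R (sg Q c) = sg P c}"
  proof (intro equalityI subsetI)
    fix V assume "V \<in> {V. circ_tri P Q R V}"
    then obtain a b c where V: "V = {a, b, c}" and ne: "a \<noteq> b" "b \<noteq> c" "a \<noteq> c"
      and on: "cmod a = 1" "cmod b = 1" "cmod c = 1"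
      and sP: "P \<in> closed_segment b c" and sQ: "Q \<in> closed_segment c a" and sR: "R \<in> closed_segment a b"
      by (auto simp: circ_tri_def S1_def)
    obtain m1 where "Q = c + complex_of_real m1 * (a - c)" using seg_mu[OF sQ] by blast
    hence a: "a = sg Q c" using sg_unique[OF Q on(3) on(1)] by blast
    obtain m2 where "R = a + complex_of_real m2 * (b - a)" using seg_mu[OF sR] by blast
    hence b: "b = sg R a" using sg_unique[OF R on(1) on(2)] by blast
    have "P \<in> closed_segment c b" using sP by (simp add: closed_segment_commute)
    then obtain m3 where "P = c + complex_of_real m3 * (b - c)" using seg_mu by blast
    hence b': "b = sg P c" using sg_unique[OF P on(3) on(2)] by blast
    show "V \<in> (\<lambda>c. {sg Q c, sg R (sg Q c), c}) ` {c. cmod c = 1 \<and> sg R (sg Q c) = sg P c}"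
      using V a b b' on by (intro image_eqI[of _ _ c]) auto
  next
    fix V assume "V \<in> (\<lambda>c. {sg Q c, sg R (sg Q c), c}) ` {c. cmod c = 1 \<and> sg R (sg Q c) = sg P c}"
    then obtain c where V: "V = {sg Q c, sg R (sg Q c), c}" and c: "cmod c = 1" and fx: "sg R (sg Q c) = sg P c"
      by auto
    define a where "a = sg Q c"
    define b where "b = sg R a"
    have a1: "cmod a = 1" using sg_sphere[OF Q c] a_def by simp
    have b1: "cmod b = 1" using sg_sphere[OF R a1] b_def by simp
    have bP: "b = sg P c" using fx by (simp add: a_def b_def)
    have "a \<noteq> c" using sg_ne[OF Q c] a_def by simp
    moreover have "b \<noteq> a" using sg_ne[OF R a1] b_def by simp
    moreover have "b \<noteq> c" using sg_ne[OF P c] bP by simp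
    moreover have "Q \<in> closed_segment c a" using sg_seg[OF Q c] a_def by simp
    moreover have "R \<in> closed_segment a b" using sg_seg[OF R a1] b_def by simp
    moreover have "P \<in> closed_segment b c" using sg_seg[OF P c] bP by (simp add: closed_segment_commute)
    ultimately have "circ_tri P Q R {a, b, c}" unfolding circ_tri_def S1_def
      using a1 b1 c by (intro exI[of _ a] exI[of _ b] exI[of _ c]) auto
    thus "V \<in> {V. circ_tri P Q R V}" using V a_def b_def by simp
  qed
  show "inj_on (\<lambda>c. {sg Q c, sg R (sg Q c), c}) {c. cmod c = 1 \<and> sg R (sg Q c) = sg P c}"
  proof (rule inj_onI)
    fix c1 c2 assume c1: "c1 \<in> {c. cmod c = 1 \<and> sg R (sg Q c) = sg P c}"
      and c2: "c2 \<in> {c. cmod c = 1 \<and> sg R (sg Q c) = sg P c}"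
      and eq: "{sg Q c1, sg R (sg Q c1), c1} = {sg Q c2, sg R (sg Q c2), c2}"
    define a1 where "a1 = sg Q c1"
    define b1 where "b1 = sg R a1"
    define a2 where "a2 = sg Q c2"
    define b2 where "b2 = sg R a2"
    have u1: "cmod c1 = 1" and u2: "cmod c2 = 1" using c1 c2 by auto
    have ua1: "cmod a1 = 1" using sg_sphere[OF Q u1] a1_def by simp
    have ua2: "cmod a2 = 1" using sg_sphere[OF Q u2] a2_def by simp
    have bp1: "b1 = sg P c1" using c1 by (simp add: a1_def b1_def)
    have bp2: "b2 = sg P c2" using c2 by (simp add: a2_def b2_def)
    have V: "{a1, b1, c1} = {a2, b2, c2}" using eq by (simp add: a1_def b1_def a2_def b2_def)
    have n1: "a1 \<noteq> c1" "b1 \<noteq> a1" "b1 \<noteq> c1"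
      using sg_ne[OF Q u1] sg_ne[OF R ua1] sg_ne[OF P u1] a1_def b1_def bp1 by auto
    have n2: "a2 \<noteq> c2" "b2 \<noteq> a2" "b2 \<noteq> c2"
      using sg_ne[OF Q u2] sg_ne[OF R ua2] sg_ne[OF P u2] a2_def b2_def bp2 by auto
    have iQ: "\<And>x y. cmod x = 1 \<Longrightarrow> cmod y = 1 \<Longrightarrow> sg Q x = sg Q y \<Longrightarrow> x = y"
      by (metis sg_invol[OF Q])
    have iR: "\<And>x y. cmod x = 1 \<Longrightarrow> cmod y = 1 \<Longrightarrow> sg R x = sg R y \<Longrightarrow> x = y"
      by (metis sg_invol[OF R])
    have qa1: "sg Q a1 = c1" using sg_invol[OF Q u1] a1_def by simp
    have pb1: "sg P b1 = c1" using sg_invol[OF P u1] bp1 by simp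
    have c2V: "c2 \<in> {a1, b1, c1}" using V by auto
    show "c1 = c2"
    proof (rule ccontr)
      assume ne: "c1 \<noteq> c2"
      hence "c2 = a1 \<or> c2 = b1" using c2V by auto
      thus False
      proof
        assume h: "c2 = a1"
        hence "a2 = c1" using qa1 a2_def by simp
        have "b2 \<in> {a1, b1, c1}" using V by auto
        moreover have "b2 \<noteq> c1" using n2 \<open>a2 = c1\<close> by simp
        moreover have "b2 \<noteq> a1" using n2 h by simp
        ultimately have "b2 = b1" by auto
        hence "sg R c1 = sg R a1" using b1_def b2_def \<open>a2 = c1\<close> by simp
        hence "c1 = a1" using iR u1 ua1 by blast
        thus False using n1 by simp
      next
        assume h: "c2 = b1"
        hence "b2 = c1" using bp2 pb1 by simp
        have "a2 \<in> {a1, b1, c1}" using V by auto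
        moreover have "a2 \<noteq> b1" using n2 h by simp
        moreover have "a2 \<noteq> c1" using n2 \<open>b2 = c1\<close> by simp
        ultimately have "a2 = a1" by auto
        hence "c2 = c1" using iQ u1 u2 a1_def a2_def by blast
        thus False using ne by simp
      qed
    qed
  qed
qed


lemma count_main:
  assumes P: "cmod P < 1" and Q: "cmod Q < 1" and R: "cmod R < 1"
    and T1: "cmod T1 = 1" and T2: "cmod T2 = 1"
    and Pl: "P = T1 + complex_of_real \<mu> * (T2 - T1)"
    and Ql: "Q = T1 + complex_of_real \<nu> * (T2 - T1)"
  defines "Dv \<equiv> (cmod (bet P Q R))^2 - (Re (alp P Q R))^2"
  shows "Dv < 0 \<Longrightarrow> {V. circ_tri P Q R V} = {}"
    and "Dv = 0 \<Longrightarrow> finite {V. circ_tri P Q R V} \<and> card {V. circ_tri P Q R V} = 1"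
    and "Dv > 0 \<Longrightarrow> finite {V. circ_tri P Q R V} \<and> card {V. circ_tri P Q R V} = 2"
proof -
  define b where "b = bet P Q R"
  define h where "h = - Re (alp P Q R)"
  define g where "g = (\<lambda>c. {sg Q c, sg R (sg Q c), c})"
  define Fx where "Fx = {c. cmod c = 1 \<and> sg R (sg Q c) = sg P c}"
  have Dv: "Dv = (cmod b)^2 - h^2" by (simp add: Dv_def b_def h_def)
  have Fx: "Fx = {c. cmod c = 1 \<and> Re (cnj b * c) = h}"
    unfolding Fx_def b_def h_def using fix_iff[OF P Q R] by blast
  have S: "{V. circ_tri P Q R V} = g ` Fx" and inj: "inj_on g Fx"
    using tri_set[OF P Q R] by (simp_all add: g_def Fx_def)
  have cardS: "card {V. circ_tri P Q R V} = card Fx" using S inj card_image by metis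
  have finS: "finite Fx \<Longrightarrow> finite {V. circ_tri P Q R V}" using S by simp
  have noid: "\<not> (b = 0 \<and> h = 0)"
  proof
    assume bh: "b = 0 \<and> h = 0"
    hence "T1 \<in> Fx" using T1 Fx by simp
    hence fx: "sg R (sg Q T1) = sg P T1" by (simp add: Fx_def)
    have "T2 = sg Q T1" using sg_unique[OF Q T1 T2 Ql] .
    moreover have "T2 = sg P T1" using sg_unique[OF P T1 T2 Pl] .
    ultimately have "sg R T2 = T2" using fx by simp
    thus False using sg_ne[OF R T2] by simp
  qed
  define nb where "nb = complex_of_real ((cmod b)^2)"
  define t where "t = sqrt ((cmod b)^2 - h^2)"
  define cp where "cp = b * Complex h t / nb"
  define cm where "cm = b * Complex h (- t) / nb"
  have inv: "b \<noteq> 0 \<Longrightarrow> Fx \<subseteq> {cp, cm}"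
    using circ_pts Fx unfolding cp_def cm_def t_def nb_def by blast
  have inv0: "b \<noteq> 0 \<Longrightarrow> h^2 \<le> (cmod b)^2 \<Longrightarrow> cp \<in> Fx \<and> cm \<in> Fx"
  proof -
    assume "b \<noteq> 0" "h^2 \<le> (cmod b)^2"
    hence t2: "t^2 = (cmod b)^2 - h^2" "(-t)^2 = (cmod b)^2 - h^2" by (simp_all add: t_def)
    show ?thesis using circ_pts_conv[OF \<open>b \<noteq> 0\<close> t2(1)] circ_pts_conv[OF \<open>b \<noteq> 0\<close> t2(2)]
      unfolding Fx cp_def cm_def nb_def mem_Collect_eq by blast
  qed
  show "Dv < 0 \<Longrightarrow> {V. circ_tri P Q R V} = {}"
  proof -
    assume neg: "Dv < 0"
    have "Fx = {}"
    proof (cases "b = 0")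
      case True
      hence "h \<noteq> 0" using neg Dv by auto
      thus ?thesis using True Fx by auto
    next
      case False
      have "\<And>c. c \<in> Fx \<Longrightarrow> False"
      proof -
        fix c assume "c \<in> Fx"
        hence "h^2 \<le> (cmod b)^2" using circ_pts[OF _ _ False] Fx by blast
        thus False using neg Dv by simp
      qed
      thus ?thesis by blast
    qed
    thus ?thesis using S by simp
  qed
  show "Dv = 0 \<Longrightarrow> finite {V. circ_tri P Q R V} \<and> card {V. circ_tri P Q R V} = 1"
  proof -
    assume z: "Dv = 0"
    have b0: "b \<noteq> 0" using noid z Dv by auto
    have "t = 0" using z Dv by (simp add: t_def)
    hence "cm = cp" by (simp add: cm_def cp_def)
    hence "Fx = {cp}" using inv[OF b0] inv0[OF b0] z Dv by auto
    thus ?thesis using cardS finS by simp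
  qed
  show "Dv > 0 \<Longrightarrow> finite {V. circ_tri P Q R V} \<and> card {V. circ_tri P Q R V} = 2"
  proof -
    assume z: "Dv > 0"
    have b0: "b \<noteq> 0" using z Dv by auto
    have "t > 0" using z Dv by (simp add: t_def)
    have nb0: "nb \<noteq> 0" using b0 by (simp add: nb_def)
    have "cm \<noteq> cp"
    proof
      assume "cm = cp"
      hence "Complex h (- t) = Complex h t" using b0 nb0 by (simp add: cm_def cp_def)
      thus False using \<open>t > 0\<close> by simp
    qed
    hence "Fx = {cp, cm}" using inv[OF b0] inv0[OF b0] z Dv by auto
    thus ?thesis using cardS finS \<open>cm \<noteq> cp\<close> by simp
  qed
qed



lemma circpt_shift: "k \<in> \<int> \<Longrightarrow> circpt (a + b + k) = circpt a * cis (2 * pi * b)"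
proof -
  assume k: "k \<in> \<int>"
  have "circpt (a + b + k) = cis (2*pi*a) * cis (2*pi*b) * cis (2*pi*k)"
    by (simp add: circpt_def cis_mult distrib_left)
  thus ?thesis using cis_multiple_2pi[OF k] by (simp add: circpt_def)
qed

lemma setup_angles:
  assumes lab12: "frac (t1 - t2) \<in> {0<..1/2}"
    and mid3: "frac (2 * t3 - (t1 + t2)) = 0"
    and lab3: "frac (t3 - t2) \<in> {0<..1/2}"
    and t4: "t4 = t3 + 1/4"
  obtains d where "0 < d" "d \<le> 1/2" "circpt t1 = circpt t3 * cis (pi * d)"
    "circpt t2 = circpt t3 * cis (- (pi * d))" "circpt t4 = circpt t3 * \<i>"
proof -
  define d where "d = frac (t1 - t2)"
  define e where "e = frac (t3 - t2)"
  define n1 where "n1 = floor (t1 - t2)"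
  define n3 where "n3 = floor (t3 - t2)"
  define m where "m = floor (2 * t3 - (t1 + t2))"
  have d: "t1 - t2 = d + n1" by (simp add: d_def n1_def frac_def)
  have e: "t3 - t2 = e + n3" by (simp add: e_def n3_def frac_def)
  have mm: "2 * t3 - (t1 + t2) = m" using mid3 by (simp add: m_def frac_def)
  have z: "2 * e - d = of_int (n1 + m - 2 * n3)" using d e mm by simp
  have b: "0 < d" "d \<le> 1/2" "0 < e" "e \<le> 1/2" using lab12 lab3 by (auto simp: d_def e_def)
  have "of_int (n1 + m - 2 * n3) < (1::real)" "of_int (n1 + m - 2 * n3) > (-1::real)"
    using z b by linarith+
  hence "n1 + m - 2 * n3 = 0" by linarith
  hence ed: "e = d / 2" using z by simp
  have "circpt t1 = circpt (t3 + d/2 + of_int (n1 - n3))" using d e ed by (simp add: algebra_simps)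
  also have "\<dots> = circpt t3 * cis (pi * d)" by (subst circpt_shift) auto
  finally have 1: "circpt t1 = circpt t3 * cis (pi * d)" .
  have "circpt t2 = circpt (t3 + (- d/2) + of_int (- n3))" using e ed by (simp add: algebra_simps)
  also have "\<dots> = circpt t3 * cis (- (pi * d))" by (subst circpt_shift) auto
  finally have 2: "circpt t2 = circpt t3 * cis (- (pi * d))" .
  have "circpt t4 = circpt (t3 + 1/4 + of_int 0)" using t4 by simp
  also have "\<dots> = circpt t3 * \<i>" by (subst circpt_shift) (auto simp: cis.code complex_eq_iff)
  finally have 3: "circpt t4 = circpt t3 * \<i>" .
  show ?thesis using that b 1 2 3 by blast
qed

lemma coll_line:
  assumes "collinear S" "x \<in> S" "y \<in> S" "x \<noteq> y" "z \<in> S"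
  shows "\<exists>l. z = x + complex_of_real l * (y - x)"
proof -
  obtain o0 v where ov: "\<forall>w\<in>S. \<exists>c. w = o0 + c *\<^sub>R v" using assms(1) collinear_alt by blast
  obtain cx cy cz where "x = o0 + cx *\<^sub>R v" "y = o0 + cy *\<^sub>R v" "z = o0 + cz *\<^sub>R v"
    using ov assms by metis
  moreover hence "cx \<noteq> cy" using assms(4) by auto
  ultimately show ?thesis
    by (intro exI[of _ "(cz - cx) / (cy - cx)"]) (simp add: scaleR_conv_of_real field_simps)
qed

lemma frame_pt:
  assumes "cmod w = 1" "T1 = w * Complex u s" "T2 = w * Complex u (- s)"
    "X = T1 + complex_of_real l * (T2 - T1)"
  shows "X * cnj w = Complex u (s * (1 - 2 * l))"
proof -
  have "w * cnj w = 1" using cm1 assms by auto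
  hence "X * cnj w = Complex u s + complex_of_real l * (Complex u (- s) - Complex u s)"
    using assms(2-4) by algebra
  thus ?thesis by (simp add: complex_eq_iff algebra_simps)
qed

lemma inner_rot: "z \<bullet> w = Re (z * cnj w)" "z \<bullet> (w * \<i>) = Im (z * cnj w)"
  by (simp_all add: inner_complex_def algebra_simps)



lemma dist_frame:
  assumes "cmod w = 1" shows "dist (w * Complex u a) (w * Complex u b) = \<bar>a - b\<bar>"
proof -
  have "dist (w * Complex u a) (w * Complex u b) = cmod (w * (Complex u a - Complex u b))"
    by (simp add: dist_norm algebra_simps)
  also have "Complex u a - Complex u b = Complex 0 (a - b)" by (simp add: complex_eq_iff)
  also have "cmod (w * Complex 0 (a - b)) = cmod (Complex 0 (a - b))" using assms by (simp add: norm_mult)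
  finally show ?thesis by (simp add: cmod_def)
qed

lemma kdist_val:
  assumes w: "cmod w = 1" and s: "s > 0" and us: "u^2 + s^2 = 1" and p: "p^2 < s^2" and q: "q^2 < s^2"
    and pq: "p \<noteq> q" and P: "P = w * Complex u p" and Q: "Q = w * Complex u q"
    and ch: "chord_ends P Q (w * Complex u s) (w * Complex u (- s))"
  shows "kdist P Q = 1/2 * \<bar>ln ((s - q) * (s + p) / ((s - p) * (s + q)))\<bar>"
proof -
  define T1 where "T1 = w * Complex u s"
  define T2 where "T2 = w * Complex u (- s)"
  have ww: "w * cnj w = 1" using cm1 w by auto
  have PQ: "P \<noteq> Q" using pq w P Q by auto
  have "\<bar>p\<bar>^2 < s^2" "\<bar>q\<bar>^2 < s^2" using p q by simp_all
  hence pb: "\<bar>p\<bar> < s" "\<bar>q\<bar> < s" using power2_less_imp_less[of _ s] s by (meson less_imp_le)+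
  have onv: "v \<in> {T1, T2}" if cv: "chord_ends P Q v1 v2" and vv: "v \<in> {v1, v2}" for v v1 v2
  proof -
    have col: "collinear {v1, v2, P, Q}" and vS: "cmod v = 1"
      using cv vv by (auto simp: chord_ends_def S1_def)
    obtain l where l: "v = P + complex_of_real l * (Q - P)"
      using coll_line[OF col _ _ PQ, of v] vv by auto
    define y where "y = p + l * (q - p)"
    have vw: "v * cnj w = Complex u y"
    proof -
      have "v * cnj w = Complex u p + complex_of_real l * (Complex u q - Complex u p)"
        using l P Q ww by algebra
      thus ?thesis by (simp add: complex_eq_iff y_def algebra_simps)
    qed
    have "cmod (v * cnj w) = 1" using vS w by (simp add: norm_mult)
    hence "u^2 + y^2 = 1" using vw by (simp add: cmod_def)
    hence "y^2 = s^2" using us by simp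
    hence "y = s \<or> y = - s" by (metis power2_eq_iff)
    moreover have "v = w * (v * cnj w)" using ww by (simp add: algebra_simps)
    ultimately show ?thesis using vw by (auto simp: T1_def T2_def)
  qed
  have dQ1: "dist T1 Q = s - q" "dist T2 Q = s + q" "dist T1 P = s - p" "dist T2 P = s + p"
    using dist_frame[OF w] pb by (auto simp: T1_def T2_def P Q)
  define \<rho> where "\<rho> = (s - q) * (s + p) / ((s - p) * (s + q))"
  have rpos: "\<rho> > 0" using pb by (auto simp: \<rho>_def intro!: divide_pos_pos mult_pos_pos)
  have "\<exists>x. (case x of (v1, v2) \<Rightarrow> chord_ends P Q v1 v2)"
    using ch by (intro exI[of _ "(T1, T2)"]) (simp add: T1_def T2_def)
  hence "(case (SOME x. case x of (v1, v2) \<Rightarrow> chord_ends P Q v1 v2) of (v1, v2) \<Rightarrow> chord_ends P Q v1 v2)"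
    by (rule someI_ex)
  then obtain v1 v2 where pr: "(SOME x. case x of (v1, v2) \<Rightarrow> chord_ends P Q v1 v2) = (v1, v2)"
    and cv: "chord_ends P Q v1 v2" by (metis (mono_tags, lifting) case_prod_beta prod.collapse)
  have "v1 \<in> {T1, T2}" "v2 \<in> {T1, T2}" "v1 \<noteq> v2" using onv[OF cv] cv by (auto simp: chord_ends_def)
  hence cases: "(v1 = T1 \<and> v2 = T2) \<or> (v1 = T2 \<and> v2 = T1)" by auto
  have kd: "kdist P Q = 1/2 * \<bar>ln ((dist v1 Q * dist v2 P) / (dist v1 P * dist v2 Q))\<bar>"
    using PQ pr by (simp add: kdist_def)
  have sw: "(s + q) * (s - p) / ((s + p) * (s - q)) = inverse \<rho>"
    by (simp add: \<rho>_def field_simps)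
  from cases show ?thesis
  proof
    assume "v1 = T1 \<and> v2 = T2"
    thus ?thesis using kd dQ1 by (simp add: mult.commute)
  next
    assume "v1 = T2 \<and> v2 = T1"
    hence "kdist P Q = 1/2 * \<bar>ln (inverse \<rho>)\<bar>" using kd dQ1 sw by (simp add: mult.commute)
    hence "kdist P Q = 1/2 * \<bar>- ln \<rho>\<bar>" by (simp only: ln_inverse)
    thus ?thesis by (simp only: abs_minus_cancel \<rho>_def)
  qed
qed



lemma ABC0:
  fixes k u s m n d0 G w e :: real
  assumes k: "k > 0" and s: "s > 0" and m: "m > 0" and n: "n > 0" and km: "k^2 * m = n"
    and mn: "m * n = d0" and nm: "n + m = 2 * w" and nm2: "(n - m)^2 = 4 * s^2 * e"
    and G: "G = d0 + e" and w: "w^2 = s^2 * e + d0" and u: "u^2 = 1 - s^2" and e: "e \<ge> 0"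
    and A: "A = 2 * k * (k\<^sup>2 + 1) * (1 - u\<^sup>2) / ((k\<^sup>2 - 2*k*u + 1) * (k\<^sup>2 + 2*k*u + 1))"
    and B: "B = (k\<^sup>2 + 1) * sqrt (1 - u\<^sup>2) / sqrt ((k\<^sup>2 - 2*k*u + 1) * (k\<^sup>2 + 2*k*u + 1))"
    and C: "C = (k\<^sup>2 - 1)\<^sup>2 * u / ((k\<^sup>2 - 2*k*u + 1) * (k\<^sup>2 + 2*k*u + 1))"
  shows "A^2 = w^2 * d0 / G^2" "B^2 = w^2 / G" "C = e * u / G" "A > 0" "B > 0"
proof -
  define den where "den = (k\<^sup>2 - 2*k*u + 1) * (k\<^sup>2 + 2*k*u + 1)"
  have "d0 > 0" using mn m n by (metis mult_pos_pos)
  hence Gp: "G > 0" using G e by linarith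
  have dm: "den * m^2 = 4 * s^2 * G"
  proof -
    have "den * m^2 = (k^2*m + m)^2 - 4 * (k^2 * m) * m * u^2" by (simp add: den_def algebra_simps power2_eq_square)
    also have "\<dots> = (n + m)^2 - 4 * (m * n) * u^2" using km by (simp add: algebra_simps)
    also have "\<dots> = 4 * s^2 * G" unfolding nm mn u G using w by (simp add: algebra_simps power2_eq_square)
    finally show ?thesis .
  qed
  have denv: "den = 4 * s^2 * G / m^2" using dm m by (simp add: field_simps)
  have dpos: "den > 0" unfolding denv using s Gp m by simp
  have sq: "sqrt (1 - u^2) = s" using u s by simp
  have u1: "1 - u^2 = s^2" using u by simp
  have Av: "A = k * (k^2 + 1) * m^2 / (2 * G)"
    unfolding A den_def[symmetric] denv u1 using s Gp m by (simp add: field_simps power2_eq_square)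
  show "A > 0" unfolding Av using k Gp m by (intro divide_pos_pos mult_pos_pos) (auto intro: add_nonneg_pos)
  have "A^2 = k^2 * m^2 * (k^2 * m + m)^2 / (4 * G^2)" unfolding Av by (simp add: field_simps power2_eq_square)
  also have "\<dots> = (m * n) * (n + m)^2 / (4 * G^2)" using km by (simp add: power2_eq_square algebra_simps)
  also have "\<dots> = w^2 * d0 / G^2" unfolding mn nm by (simp add: field_simps power2_eq_square)
  finally show "A^2 = w^2 * d0 / G^2" .
  have Bv: "B = (k^2 + 1) * s / sqrt den" unfolding B den_def[symmetric] sq by simp
  show "B > 0" unfolding Bv using s dpos by (intro divide_pos_pos mult_pos_pos) (auto intro: add_nonneg_pos)
  have "B^2 = (k^2 + 1)^2 * s^2 / den" unfolding Bv using dpos by (simp add: power_divide power_mult_distrib)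
  also have "\<dots> = (k^2 * m + m)^2 / (4 * G)" unfolding denv using s m Gp by (simp add: field_simps power2_eq_square)
  also have "\<dots> = w^2 / G" unfolding km nm by (simp add: field_simps power2_eq_square)
  finally show "B^2 = w^2 / G" .
  have "C = (k^2 - 1)^2 * u / den" by (simp add: C den_def)
  also have "\<dots> = (k^2 * m - m)^2 * u / (4 * s^2 * G)" unfolding denv using s m Gp by (simp add: field_simps power2_eq_square)
  also have "\<dots> = e * u / G" unfolding km nm2 using s by (simp add: field_simps)
  finally show "C = e * u / G" .
qed



lemma Dpoly0:
  fixes u p q x y :: real
  shows "((1 - u^2 - p^2) * (1 - u^2 - q^2) + (p - q)^2) * ((2 * u - x - ((u * u - p * q) * x + (u * q + p * u) * y))^2 +
      (p + q - y - ((u * q + p * u) * x - (u * u - p * q) * y))^2 -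
      (2 * (u * x) + (y * q + (p * y - 1)) - (u * u + p * q))^2)
    = ((1 - u^2 - p^2) * (1 - u^2 - q^2) + (p - q)^2)^2 * x^2 - 2 * u * ((1 - u^2 - p^2) * (1 - u^2 - q^2) + (p - q)^2) * (p - q)^2 * x + ((1 - u^2 - p^2) * (1 - u^2 - q^2) + (p - q)^2) * ((1 - u^2 - p^2) * (1 - u^2 - q^2)) * y^2
      + (p - q)^4 * u^2 - ((1 - u^2 - p^2) * (1 - u^2 - q^2)) * (1 - u^2 - p * q)^2"
  by algebra

lemma Fsign:
  fixes A2 B2 C G d0 w e x y u :: real
  assumes "A2 = w^2 * d0 / G^2" "B2 = w^2 / G" "C = e * u / G" "G > 0" "d0 > 0" "w \<noteq> 0"
  shows "w^2 * d0 * ((x - C)^2 / A2 + y^2 / B2 - 1) = G^2 * x^2 - 2 * G * e * u * x + e^2 * u^2 + G * d0 * y^2 - w^2 * d0"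
proof -
  have "w^2 * d0 * ((x - C)^2 / A2 + y^2 / B2 - 1) = (G * x - G * C)^2 + G * d0 * y^2 - w^2 * d0"
    unfolding assms(1,2) using assms(4-6) by (simp add: field_simps power2_eq_square)
  also have "G * C = e * u" using assms by simp
  finally show ?thesis by (simp add: power2_eq_square algebra_simps)
qed



lemma rot_ba: assumes "cmod \<omega> = 1"
  shows "bet (\<omega> * a) (\<omega> * b) (\<omega> * c) = \<omega> * bet a b c" "alp (\<omega> * a) (\<omega> * b) (\<omega> * c) = alp a b c"
proof -
  have w: "\<omega> * cnj \<omega> = 1" using cm1 assms by auto
  show "bet (\<omega> * a) (\<omega> * b) (\<omega> * c) = \<omega> * bet a b c" unfolding bet_def using w by simp algebra
  show "alp (\<omega> * a) (\<omega> * b) (\<omega> * c) = alp a b c" unfolding alp_def using w by simp algebra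
qed

lemma Dpoly:
  fixes u p q x y :: real
  shows "((1 - u^2 - p^2) * (1 - u^2 - q^2) + (p - q)^2) * ((cmod (bet (Complex u p) (Complex u q) (Complex x y)))^2 - (Re (alp (Complex u p) (Complex u q) (Complex x y)))^2)
    = ((1 - u^2 - p^2) * (1 - u^2 - q^2) + (p - q)^2)^2 * x^2 - 2 * u * ((1 - u^2 - p^2) * (1 - u^2 - q^2) + (p - q)^2) * (p - q)^2 * x + ((1 - u^2 - p^2) * (1 - u^2 - q^2) + (p - q)^2) * ((1 - u^2 - p^2) * (1 - u^2 - q^2)) * y^2
      + (p - q)^4 * u^2 - ((1 - u^2 - p^2) * (1 - u^2 - q^2)) * (1 - u^2 - p * q)^2"
  using Dpoly0[of u p q x y] by (simp add: cmod_power2 bet_def alp_def)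

lemma disk_id:
  fixes G d0 e w s u x y :: real
  assumes G: "G = d0 + e" and w: "w^2 = s^2 * e + d0" and u: "u^2 = 1 - s^2"
    and R: "G^2 * x^2 - 2 * G * e * u * x + e^2 * u^2 + G * d0 * y^2 - w^2 * d0 = 0"
    and pos: "G > 0" "d0 > 0" "e \<ge> 0"
  shows "x^2 + y^2 \<le> 1"
proof -
  have eq: "G * d0 * (x^2 + y^2 - 1) = - (G * e * (x - u)^2)" using assms(1-4) by algebra
  have "G * e * (x - u)^2 \<ge> 0" using pos by simp
  hence "G * d0 * (x^2 + y^2 - 1) \<le> 0" using eq by linarith
  have gp: "G * d0 > 0" using pos by simp
  show ?thesis
  proof (rule ccontr)
    assume "\<not> ?thesis"
    hence "x^2 + y^2 - 1 > 0" by simp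
    hence "G * d0 * (x^2 + y^2 - 1) > 0" using gp by simp
    thus False using \<open>G * d0 * (x^2 + y^2 - 1) \<le> 0\<close> by simp
  qed
qed

lemma T_on:
  fixes G d0 e w s u y0 :: real
  assumes G: "G = d0 + e" and w: "w^2 = s^2 * e + d0" and u: "u^2 = 1 - s^2" and y0: "y0^2 = s^2"
  shows "G^2 * u^2 - 2 * G * e * u * u + e^2 * u^2 + G * d0 * y0^2 - w^2 * d0 = 0"
  using assms by algebra

lemma ellF_rot: "ellF A B C \<omega> (\<omega> * \<i>) z = (Re (z * cnj \<omega>) - C)^2 / A^2 + (Im (z * cnj \<omega>))^2 / B^2"
  by (simp add: ellF_def inner_rot)

lemma aux_der: fixes u C A B a b y0 :: real
  assumes key: "(u - C) / A^2 = u / B^2"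
  shows "inverse (A^2) * (2 * (u - C) * a) + inverse (B^2) * (2 * y0 * b) = 2 / B^2 * (u * a + y0 * b)"
proof -
  have "inverse (A^2) * (2 * (u - C) * a) = 2 * a * ((u - C) / A^2)" by (simp add: divide_inverse mult.commute mult.left_commute)
  also have "\<dots> = 2 * a * (u / B^2)" by (simp only: key)
  finally show ?thesis by (simp add: divide_inverse algebra_simps)
qed

lemma deriv_ell:
  assumes key: "(u - C) / A^2 = u / B^2" and B: "B \<noteq> 0" and T: "T = \<omega> * Complex u y0" and w: "cmod \<omega> = 1"
  shows "\<exists>c. c \<noteq> 0 \<and> (ellF A B C \<omega> (\<omega> * \<i>) has_derivative (\<lambda>h. c * (T \<bullet> h))) (at T)"
proof -
  have e: "ellF A B C \<omega> (\<omega> * \<i>) = (\<lambda>z. inverse (A^2) * (z \<bullet> \<omega> - C)^2 + inverse (B^2) * (z \<bullet> (\<omega> * \<i>))^2)"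
    by (simp add: ellF_def fun_eq_iff field_simps)
  have d: "((\<lambda>z. inverse (A^2) * (z \<bullet> \<omega> - C)^2 + inverse (B^2) * (z \<bullet> (\<omega> * \<i>))^2) has_derivative
     (\<lambda>h. inverse (A^2) * (2 * (T \<bullet> \<omega> - C) * (h \<bullet> \<omega>)) + inverse (B^2) * (2 * (T \<bullet> (\<omega> * \<i>)) * (h \<bullet> (\<omega> * \<i>))))) (at T)"
    by (auto intro!: derivative_eq_intros simp: fun_eq_iff algebra_simps)
  have wr: "(Re \<omega>)^2 + (Im \<omega>)^2 = 1" using w cmod_power2[of \<omega>] by simp
  have "T \<bullet> \<omega> = u * ((Re \<omega>)^2 + (Im \<omega>)^2)" "T \<bullet> (\<omega> * \<i>) = y0 * ((Re \<omega>)^2 + (Im \<omega>)^2)"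
    by (simp_all add: T inner_complex_def algebra_simps power2_eq_square)
  hence tw: "T \<bullet> \<omega> = u" "T \<bullet> (\<omega> * \<i>) = y0" using wr by simp_all
  have th: "\<And>h. T \<bullet> h = u * (h \<bullet> \<omega>) + y0 * (h \<bullet> (\<omega> * \<i>))"
    by (simp add: T inner_complex_def algebra_simps)
  have "(\<lambda>h. inverse (A^2) * (2 * (T \<bullet> \<omega> - C) * (h \<bullet> \<omega>)) + inverse (B^2) * (2 * (T \<bullet> (\<omega> * \<i>)) * (h \<bullet> (\<omega> * \<i>))))
     = (\<lambda>h. (2 / B^2) * (T \<bullet> h))"
  proof
    fix h
    show "inverse (A^2) * (2 * (T \<bullet> \<omega> - C) * (h \<bullet> \<omega>)) + inverse (B^2) * (2 * (T \<bullet> (\<omega> * \<i>)) * (h \<bullet> (\<omega> * \<i>)))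
      = (2 / B^2) * (T \<bullet> h)"
      apply (subst tw(1), subst tw(2), subst th)
      by (rule aux_der[OF key])
  qed
  hence "(ellF A B C \<omega> (\<omega> * \<i>) has_derivative (\<lambda>h. (2 / B^2) * (T \<bullet> h))) (at T)"
    using d e by simp
  thus ?thesis using B by (intro exI[of _ "2 / B^2"]) simp
qed



lemma clos:
  assumes w: "cmod \<omega> = 1" and F1: "ellF A B C \<omega> (\<omega> * \<i>) R = 1"
  shows "R \<in> closure {z. ellF A B C \<omega> (\<omega> * \<i>) z < 1}"
  unfolding closure_approachable
proof (intro allI impI)
  fix \<epsilon> :: real assume ep: "\<epsilon> > 0"
  have ww: "\<omega> * cnj \<omega> = 1" using cm1 w by auto
  define z0 where "z0 = \<omega> * complex_of_real C"
  define M where "M = cmod (R - z0)"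
  define t where "t = min (1/2) (\<epsilon> / (2 * (M + 1)))"
  have M0: "M \<ge> 0" by (simp add: M_def)
  have "t \<le> 1/2" unfolding t_def by (rule min.cobounded1)
  moreover have "t > 0" using ep M0 unfolding t_def by (auto intro!: divide_pos_pos)
  ultimately have t0: "t > 0" "t \<le> 1/2" by auto
  define z where "z = z0 + complex_of_real (1 - t) * (R - z0)"
  have zc: "z * cnj \<omega> = complex_of_real C + complex_of_real (1 - t) * (R * cnj \<omega> - complex_of_real C)"
    unfolding z_def z0_def using ww by algebra
  have "ellF A B C \<omega> (\<omega> * \<i>) z = (1 - t)^2 * ellF A B C \<omega> (\<omega> * \<i>) R"
    unfolding ellF_rot zc by (simp add: power2_eq_square field_simps)
  hence "ellF A B C \<omega> (\<omega> * \<i>) z = (1 - t)^2" using F1 by simp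
  moreover have "(1 - t)^2 < 1"
  proof -
    have "(1 - t) * (1 - t) \<le> 1 - t" using t0 by (intro mult_left_le) auto
    thus ?thesis unfolding power2_eq_square using t0 by linarith
  qed
  ultimately have zin: "z \<in> {z. ellF A B C \<omega> (\<omega> * \<i>) z < 1}" by simp
  have "z - R = - (complex_of_real t * (R - z0))" by (simp add: z_def algebra_simps)
  hence "dist z R = t * M" using t0 by (simp add: dist_norm norm_mult M_def)
  also have "\<dots> \<le> \<epsilon> / (2 * (M + 1)) * M" using M0 by (intro mult_right_mono) (auto simp: t_def)
  also have "\<dots> < \<epsilon>"
  proof -
    have "M / (2 * (M + 1)) < 1" using M0 by (simp add: field_simps)
    hence "\<epsilon> * (M / (2 * (M + 1))) < \<epsilon> * 1" using ep by (intro mult_strict_left_mono) auto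
    thus ?thesis by simp
  qed
  finally show "\<exists>y\<in>{z. ellF A B C \<omega> (\<omega> * \<i>) z < 1}. dist y R < \<epsilon>" using zin by blast
qed



theorem theorem3p3:
  fixes P Q R :: complex and t1 t2 t3 t4 u k A B C :: real
    and E \<Phi> :: "complex set"
  assumes PD: "P \<in> KD" and QD: "Q \<in> KD" and RD: "R \<in> KD"
    and ncol: "\<not> collinear {P, Q, R}"
    and chord: "chord_ends P Q (circpt t1) (circpt t2)"
    and lab12: "frac (t1 - t2) \<in> {0<..1/2}"
    and mid3: "frac (2 * t3 - (t1 + t2)) = 0"
    and lab3: "frac (t3 - t2) \<in> {0<..1/2}"
    and t4: "t4 = t3 + 1/4"
    and u: "u = P \<bullet> circpt t3"
    and k: "k = exp (kdist P Q)"
    and A: "A = 2 * k * (k\<^sup>2 + 1) * (1 - u\<^sup>2) / ((k\<^sup>2 - 2*k*u + 1) * (k\<^sup>2 + 2*k*u + 1))"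
    and B: "B = (k\<^sup>2 + 1) * sqrt (1 - u\<^sup>2) / sqrt ((k\<^sup>2 - 2*k*u + 1) * (k\<^sup>2 + 2*k*u + 1))"
    and C: "C = (k\<^sup>2 - 1)\<^sup>2 * u / ((k\<^sup>2 - 2*k*u + 1) * (k\<^sup>2 + 2*k*u + 1))"
    and E: "E = {z. ellF A B C (circpt t3) (circpt t4) z = 1}"
    and \<Phi>: "\<Phi> = {z. ellF A B C (circpt t3) (circpt t4) z < 1}"
  shows "Q \<bullet> circpt t3 = u
    \<and> E \<subseteq> KD \<union> S1
    \<and> circpt t1 \<in> E \<and> circpt t2 \<in> E
    \<and> (\<exists>c. c \<noteq> 0 \<and> (ellF A B C (circpt t3) (circpt t4) has_derivative (\<lambda>h. c * (circpt t1 \<bullet> h))) (at (circpt t1)))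
    \<and> (\<exists>c. c \<noteq> 0 \<and> (ellF A B C (circpt t3) (circpt t4) has_derivative (\<lambda>h. c * (circpt t2 \<bullet> h))) (at (circpt t2)))
    \<and> (R \<in> \<Phi> \<longrightarrow> {V. circ_tri P Q R V} = {})
    \<and> (R \<in> E \<longrightarrow> finite {V. circ_tri P Q R V} \<and> card {V. circ_tri P Q R V} = 1)
    \<and> (R \<in> KD - closure \<Phi> \<longrightarrow> finite {V. circ_tri P Q R V} \<and> card {V. circ_tri P Q R V} = 2)"
proof -
  obtain d where d: "0 < d" "d \<le> 1/2" and c1: "circpt t1 = circpt t3 * cis (pi * d)"
    and c2: "circpt t2 = circpt t3 * cis (- (pi * d))" and c4: "circpt t4 = circpt t3 * \<i>"
    using setup_angles[OF lab12 mid3 lab3 t4] by blast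
  define \<omega> where "\<omega> = circpt t3"
  have w: "cmod \<omega> = 1" by (simp add: \<omega>_def circpt_def)
  have ww: "\<omega> * cnj \<omega> = 1" using cm1 w by auto
  define \<theta> where "\<theta> = pi * d"
  define uu where "uu = cos \<theta>"
  define s where "s = sin \<theta>"
  have "\<theta> < pi" "0 < \<theta>" using d by (auto simp: \<theta>_def)
  hence s0: "s > 0" by (simp add: s_def sin_gt_zero)
  have us: "uu^2 + s^2 = 1" using sin_cos_squared_add[of \<theta>] by (simp add: uu_def s_def)
  have s2: "s^2 = 1 - uu^2" using us by simp
  define T1 where "T1 = circpt t1"
  define T2 where "T2 = circpt t2"
  have T1: "T1 = \<omega> * Complex uu s" by (simp add: T1_def c1 \<omega>_def \<theta>_def uu_def s_def cis.code)
  have T2: "T2 = \<omega> * Complex uu (- s)" by (simp add: T2_def c2 \<omega>_def \<theta>_def uu_def s_def cis.code)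
  have T1n: "cmod T1 = 1" and T2n: "cmod T2 = 1" by (simp_all add: T1_def T2_def circpt_def)
  have PQ: "P \<noteq> Q" and col: "collinear {T1, T2, P, Q}" and T12: "T1 \<noteq> T2"
    using chord by (auto simp: chord_ends_def T1_def T2_def)
  obtain \<mu> where Pl: "P = T1 + complex_of_real \<mu> * (T2 - T1)" using coll_line[OF col _ _ T12, of P] by auto
  obtain \<nu> where Ql: "Q = T1 + complex_of_real \<nu> * (T2 - T1)" using coll_line[OF col _ _ T12, of Q] by auto
  define p where "p = s * (1 - 2 * \<mu>)"
  define q where "q = s * (1 - 2 * \<nu>)"
  have Pw: "P * cnj \<omega> = Complex uu p" using frame_pt[OF w T1 T2 Pl] by (simp add: p_def)
  have Qw: "Q * cnj \<omega> = Complex uu q" using frame_pt[OF w T1 T2 Ql] by (simp add: q_def)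
  have rot: "\<And>z. z = \<omega> * (z * cnj \<omega>)" using ww by (simp add: algebra_simps)
  have Pf: "P = \<omega> * Complex uu p" using rot[of P] Pw by simp
  have Qf: "Q = \<omega> * Complex uu q" using rot[of Q] Qw by simp
  have uval: "u = uu" using u Pw by (simp add: inner_rot \<omega>_def[symmetric])
  have conj1: "Q \<bullet> circpt t3 = u" using Qw uval by (simp add: inner_rot \<omega>_def[symmetric])
  have Pn: "cmod P < 1" "cmod Q < 1" "cmod R < 1" using PD QD RD by (auto simp: KD_def)
  have cmw: "\<And>z. cmod z = cmod (z * cnj \<omega>)" using w by (simp add: norm_mult)
  have "cmod (Complex uu p) < 1" "cmod (Complex uu q) < 1" using Pn cmw Pw Qw by metis+
  hence "uu^2 + p^2 < 1" "uu^2 + q^2 < 1" by (simp_all add: cmod_def)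
  hence pp: "p^2 < s^2" and qq: "q^2 < s^2" using us by linarith+
  have pq: "p \<noteq> q" using PQ Pf Qf by auto
  have "\<bar>p\<bar>^2 < s^2" "\<bar>q\<bar>^2 < s^2" using pp qq by simp_all
  hence pb: "\<bar>p\<bar> < s" "\<bar>q\<bar> < s" using power2_less_imp_less[of _ s] s0 by (meson less_imp_le)+
  have kd: "kdist P Q = 1/2 * \<bar>ln ((s - q) * (s + p) / ((s - p) * (s + q)))\<bar>"
    using kdist_val[OF w s0 us pp qq pq Pf Qf] chord T1 T2 T1_def T2_def by simp
  define n where "n = (s - q) * (s + p)"
  define m where "m = (s - p) * (s + q)"
  have n0: "n > 0" and m0: "m > 0" using pb by (auto simp: n_def m_def intro!: mult_pos_pos)
  define \<rho> where "\<rho> = n / m"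
  have r0: "\<rho> > 0" using n0 m0 by (simp add: \<rho>_def)
  have k0: "k > 0" using k by simp
  have k2: "k^2 = exp \<bar>ln \<rho>\<bar>" unfolding k kd exp_double[symmetric] by (simp add: \<rho>_def n_def m_def)
  have Krel: "k^2 * m = n \<or> k^2 * n = m"
  proof (cases "ln \<rho> \<ge> 0")
    case True
    hence "k^2 = \<rho>" using k2 r0 by simp
    thus ?thesis using m0 by (simp add: \<rho>_def)
  next
    case False
    hence "k^2 = exp (- ln \<rho>)" using k2 by simp
    also have "\<dots> = inverse \<rho>" using r0 by (simp add: exp_minus)
    finally show ?thesis using n0 m0 by (simp add: \<rho>_def field_simps)
  qed
  define d0 where "d0 = (s^2 - p^2) * (s^2 - q^2)"
  define e where "e = (p - q)^2"
  define G where "G = d0 + e"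
  define wv where "wv = s^2 - p * q"
  have mn: "m * n = d0" by (simp add: m_def n_def d0_def power2_eq_square algebra_simps)
  have nm: "n + m = 2 * wv" by (simp add: m_def n_def wv_def power2_eq_square algebra_simps)
  have nm2: "(n - m)^2 = 4 * s^2 * e" by (simp add: m_def n_def e_def power2_eq_square algebra_simps)
  have wv2: "wv^2 = s^2 * e + d0" by (simp add: wv_def e_def d0_def power2_eq_square algebra_simps)
  have u2: "u^2 = 1 - s^2" using s2 uval by simp
  have e0: "e \<ge> 0" by (simp add: e_def)
  have "A^2 = wv^2 * d0 / G^2 \<and> B^2 = wv^2 / G \<and> C = e * u / G \<and> A > 0 \<and> B > 0"
  proof (cases "k^2 * m = n")
    case True
    show ?thesis using ABC0[OF k0 s0 m0 n0 True mn nm nm2 G_def wv2 u2 e0 A B C] by blast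
  next
    case False
    hence kk: "k^2 * n = m" using Krel by blast
    have mn': "n * m = d0" using mn by (simp add: mult.commute)
    have nm': "m + n = 2 * wv" using nm by simp
    have nm2': "(m - n)^2 = 4 * s^2 * e" using nm2 by (simp add: power2_commute)
    show ?thesis using ABC0[OF k0 s0 n0 m0 kk mn' nm' nm2' G_def wv2 u2 e0 A B C] by blast
  qed
  hence A2: "A^2 = wv^2 * d0 / G^2" and B2: "B^2 = wv^2 / G" and Cv: "C = e * u / G" and A0: "A > 0" and B0: "B > 0"
    by auto
  have d00: "d0 > 0" using mn m0 n0 by (metis mult_pos_pos)
  have G0: "G > 0" using d00 e0 by (simp add: G_def)
  have "\<bar>p * q\<bar> < s * s" using pb by (simp add: abs_mult mult_strict_mono')
  hence wv0: "wv > 0" by (simp add: wv_def power2_eq_square)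
  hence wvn: "wv \<noteq> 0" by simp
  have c4': "circpt t4 = \<omega> * \<i>" using c4 \<omega>_def by simp
  define F where "F = ellF A B C \<omega> (\<omega> * \<i>)"
  have Fz: "\<And>z. wv^2 * d0 * (F z - 1) = G^2 * (Re (z * cnj \<omega>))^2 - 2 * G * e * u * Re (z * cnj \<omega>) + e^2 * u^2
       + G * d0 * (Im (z * cnj \<omega>))^2 - wv^2 * d0"
    unfolding F_def ellF_rot by (rule Fsign[OF A2 B2 Cv G0 d00 wvn])
  have Eeq: "E = {z. F z = 1}" and \<Phi>eq: "\<Phi> = {z. F z < 1}" using E \<Phi> by (simp_all add: F_def c4' \<omega>_def)
  have ww0: "wv^2 * d0 > 0" using wv0 d00 by simp
  have Esub: "E \<subseteq> KD \<union> S1"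
  proof
    fix z assume "z \<in> E"
    hence F1: "F z = 1" using Eeq by simp
    define x where "x = Re (z * cnj \<omega>)"
    define y where "y = Im (z * cnj \<omega>)"
    have "G^2 * x^2 - 2 * G * e * u * x + e^2 * u^2 + G * d0 * y^2 - wv^2 * d0 = 0"
      using Fz[of z] F1 by (simp add: x_def y_def)
    hence "x^2 + y^2 \<le> 1" by (rule disk_id[OF G_def wv2 u2 _ G0 d00 e0])
    hence "cmod (z * cnj \<omega>) \<le> 1" by (simp add: cmod_def x_def y_def)
    hence "cmod z \<le> 1" using cmw by metis
    thus "z \<in> KD \<union> S1" by (auto simp: KD_def S1_def less_eq_real_def)
  qed
  have T1w: "T1 * cnj \<omega> = Complex uu s" using T1 ww by (simp add: algebra_simps)
  have T2w: "T2 * cnj \<omega> = Complex uu (- s)" using T2 ww by (simp add: algebra_simps)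
  have FT: "F T = 1" if Tw: "T * cnj \<omega> = Complex uu y0" and y0: "y0^2 = s^2" for T y0
  proof -
    have "wv^2 * d0 * (F T - 1) = 0"
      using Fz[of T] T_on[OF G_def wv2 u2 y0] Tw uval by simp
    thus ?thesis using wvn d00 by simp
  qed
  have T1E: "circpt t1 \<in> E" using FT[OF T1w] Eeq T1_def by simp
  have T2E: "circpt t2 \<in> E" using FT[OF T2w] Eeq T2_def by simp
  have key: "(uu - C) / A^2 = uu / B^2"
  proof -
    have "uu - C = uu * d0 / G" using G0 uval by (simp add: Cv G_def field_simps)
    thus ?thesis unfolding A2 B2 using G0 d00 wvn by (simp add: field_simps power2_eq_square)
  qed
  have D1: "\<exists>c. c \<noteq> 0 \<and> (ellF A B C (circpt t3) (circpt t4) has_derivative (\<lambda>h. c * (circpt t1 \<bullet> h))) (at (circpt t1))"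
    using deriv_ell[OF key _ T1 w] B0 by (simp add: c4' \<omega>_def T1_def)
  have D2: "\<exists>c. c \<noteq> 0 \<and> (ellF A B C (circpt t3) (circpt t4) has_derivative (\<lambda>h. c * (circpt t2 \<bullet> h))) (at (circpt t2))"
    using deriv_ell[OF key _ T2 w] B0 by (simp add: c4' \<omega>_def T2_def)
  define x where "x = Re (R * cnj \<omega>)"
  define y where "y = Im (R * cnj \<omega>)"
  have Rf: "R = \<omega> * Complex x y" using rot[of R] by (simp add: x_def y_def complex_eq_iff)
  define Dv where "Dv = (cmod (bet P Q R))^2 - (Re (alp P Q R))^2"
  have Dv': "Dv = (cmod (bet (Complex uu p) (Complex uu q) (Complex x y)))^2 - (Re (alp (Complex uu p) (Complex uu q) (Complex x y)))^2"
    unfolding Dv_def Pf Qf Rf rot_ba[OF w] using w by (simp add: norm_mult)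
  have Gs: "G = (1 - uu^2 - p^2) * (1 - uu^2 - q^2) + (p - q)^2" by (simp add: G_def d0_def e_def s2)
  have d0s: "d0 = (1 - uu^2 - p^2) * (1 - uu^2 - q^2)" by (simp add: d0_def s2)
  have wvs: "wv = 1 - uu^2 - p * q" by (simp add: wv_def s2)
  have GD: "G * Dv = G^2 * x^2 - 2 * G * e * u * x + e^2 * u^2 + G * d0 * y^2 - wv^2 * d0"
    unfolding Dv' Gs d0s wvs e_def uval using Dpoly[of uu p q x y] by algebra
  have FR: "wv^2 * d0 * (F R - 1) = G * Dv" using Fz[of R] GD by (simp add: x_def y_def)
  have sg1: "F R < 1 \<longleftrightarrow> Dv < 0"
  proof -
    have "F R < 1 \<longleftrightarrow> wv^2 * d0 * (F R - 1) < 0" using ww0 d00 by (simp add: mult_less_0_iff)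
    also have "\<dots> \<longleftrightarrow> Dv < 0" unfolding FR using G0 by (simp add: mult_less_0_iff)
    finally show ?thesis .
  qed
  have sg2: "F R = 1 \<longleftrightarrow> Dv = 0"
  proof -
    have "F R = 1 \<longleftrightarrow> wv^2 * d0 * (F R - 1) = 0" using wvn d00 by simp
    also have "\<dots> \<longleftrightarrow> Dv = 0" unfolding FR using G0 by simp
    finally show ?thesis .
  qed
  note cm = count_main[OF Pn T1n T2n Pl Ql, folded Dv_def]
  have C1: "R \<in> \<Phi> \<longrightarrow> {V. circ_tri P Q R V} = {}"
    using cm(1) sg1 \<Phi>eq by auto
  have C2: "R \<in> E \<longrightarrow> finite {V. circ_tri P Q R V} \<and> card {V. circ_tri P Q R V} = 1"
    using cm(2) sg2 Eeq by auto
  have C3: "R \<in> KD - closure \<Phi> \<longrightarrow> finite {V. circ_tri P Q R V} \<and> card {V. circ_tri P Q R V} = 2"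
  proof
    assume Rin: "R \<in> KD - closure \<Phi>"
    hence "R \<notin> \<Phi>" using closure_subset by blast
    hence "F R \<ge> 1" using \<Phi>eq by simp
    moreover have "F R \<noteq> 1"
    proof
      assume "F R = 1"
      hence "R \<in> closure {z. F z < 1}" unfolding F_def by (rule clos[OF w])
      thus False using Rin \<Phi>eq by simp
    qed
    ultimately have "F R > 1" by simp
    hence "\<not> Dv < 0" "Dv \<noteq> 0" using sg1 sg2 by auto
    hence "Dv > 0" by linarith
    thus "finite {V. circ_tri P Q R V} \<and> card {V. circ_tri P Q R V} = 2" using cm(3) by simp
  qed
  show ?thesis using conj1 Esub T1E T2E D1 D2 C1 C2 C3 by blast
qed


end
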